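(* Let $R$ be a finite commutative local Frobenius ring with residue field $\mathbb{F}_q$ and $|R|=q^\omega$, and let $\ell$ be a nonnegative integer. For $i=1,2$, let $C_i$ be a linear code of length $n$ over $R$ with generator matrix $\mathrm{G}_i$ and parity check matrix $\mathrm{H}_i$, and suppose $C_1+C_2=R^n$. Then $\{C_1,C_2\}$ is an $\ell$-DLIP if and only if $\texttt{Rank}_q(\mathrm{H}_2\mathrm{G}_1^\top)=\texttt{Rank}_q(\mathrm{G}_1)-\ell=n\omega-\texttt{Rank}_q(\mathrm{G}_2)$ or $\texttt{Rank}_q(\mathrm{H}_1\mathrm{G}_2^\top)=\texttt{Rank}_q(\mathrm{G}_2)-\ell=n\omega-\texttt{Rank}_q(\mathrm{G}_1)$.
   Context: A linear code of length $n$ over $R$ is an $R$-submodule of $R^n$; $\dim(C):=\log_q|C|$. A pair $\{C,D\}$ is an $\ell$-DLIP if $\dim(C\cap D)=\ell$. A generator matrix of $C$ is a matrix whose rows generate $C$; a parity check matrix is a generator matrix of $C^\perp$ with respect to the standard inner product $\sum_j u_jc_j$. For a matrix $\mathrm{A}$ over $R$, $\texttt{Rank}_q(\mathrm{A}):=\log_q|M|$ where $M$ is the $R$-submodule spanned by the rows of $\mathrm{A}$. *)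

theory Defs
  imports Complex_Main
begin

definition is_ideal :: "'a::comm_ring_1 set \<Rightarrow> bool" where
  "is_ideal I \<longleftrightarrow> 0 \<in> I \<and> (\<forall>x\<in>I. \<forall>y\<in>I. x + y \<in> I) \<and> (\<forall>r. \<forall>x\<in>I. r * x \<in> I)"

definition maximal_ideal :: "'a::comm_ring_1 set \<Rightarrow> bool" where
  "maximal_ideal M \<longleftrightarrow> is_ideal M \<and> M \<noteq> UNIV \<and>
     (\<forall>J. is_ideal J \<and> M \<subseteq> J \<longrightarrow> J = M \<or> J = UNIV)"

definition minimal_ideal :: "'a::comm_ring_1 set \<Rightarrow> bool" where
  "minimal_ideal I \<longleftrightarrow> is_ideal I \<and> I \<noteq> {0} \<and>
     (\<forall>J. is_ideal J \<and> J \<subseteq> I \<longrightarrow> J = {0} \<or> J = I)"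

definition local_ring :: "'a::comm_ring_1 itself \<Rightarrow> bool" where
  "local_ring TYPE('a) \<longleftrightarrow> (\<exists>!M::'a set. maximal_ideal M)"

definition the_max_ideal :: "'a::comm_ring_1 itself \<Rightarrow> 'a set" where
  "the_max_ideal TYPE('a) = (THE M::'a set. maximal_ideal M)"

text \<open>Socle of a local ring = annihilator of the maximal ideal (= sum of minimal ideals).
  A finite commutative local ring is Frobenius iff its socle is simple, i.e.
  the socle is a minimal ideal (equivalently, R/J(R) is isomorphic to soc(R)).\<close>
definition socle :: "'a::comm_ring_1 itself \<Rightarrow> 'a set" where
  "socle TYPE('a) = {x. \<forall>m\<in>the_max_ideal TYPE('a). x * m = 0}"

definition local_frobenius :: "'a::comm_ring_1 itself \<Rightarrow> bool" where
  "local_frobenius TYPE('a) \<longleftrightarrow> local_ring TYPE('a) \<and> minimal_ideal (socle TYPE('a))"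

definition residue_card :: "'a::comm_ring_1 itself \<Rightarrow> nat" where
  "residue_card TYPE('a) =
     card ((UNIV::'a set) // {(x,y). x - y \<in> the_max_ideal TYPE('a)})"

definition linear_code :: "('n::finite \<Rightarrow> 'a::comm_ring_1) set \<Rightarrow> bool" where
  "linear_code C \<longleftrightarrow> (\<lambda>_. 0) \<in> C \<and> (\<forall>x\<in>C. \<forall>y\<in>C. (\<lambda>j. x j + y j) \<in> C) \<and> (\<forall>r. \<forall>x\<in>C. (\<lambda>j. r * x j) \<in> C)"

definition code_dim :: "nat \<Rightarrow> ('n::finite \<Rightarrow> 'a::comm_ring_1) set \<Rightarrow> real" where
  "code_dim q C = log (real q) (real (card C))"

definition DLIP :: "nat \<Rightarrow> nat \<Rightarrow> ('n::finite \<Rightarrow> 'a::comm_ring_1) set \<Rightarrow> ('n \<Rightarrow> 'a) set \<Rightarrow> bool" where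
  "DLIP q l C D \<longleftrightarrow> code_dim q (C \<inter> D) = real l"

definition code_sum :: "('n \<Rightarrow> 'a::comm_ring_1) set \<Rightarrow> ('n \<Rightarrow> 'a) set \<Rightarrow> ('n \<Rightarrow> 'a) set" where
  "code_sum C D = {(\<lambda>j. x j + y j) |x y. x \<in> C \<and> y \<in> D}"

definition dual_code :: "('n::finite \<Rightarrow> 'a::comm_ring_1) set \<Rightarrow> ('n \<Rightarrow> 'a) set" where
  "dual_code C = {u. \<forall>c\<in>C. (\<Sum>j\<in>UNIV. u j * c j) = 0}"

definition row_span :: "('r::finite \<Rightarrow> 'c \<Rightarrow> 'a::comm_ring_1) \<Rightarrow> ('c \<Rightarrow> 'a) set" where
  "row_span A = {x. \<exists>coef::'r \<Rightarrow> 'a. x = (\<lambda>j. \<Sum>i\<in>UNIV. coef i * A i j)}"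

definition generator_matrix :: "('r::finite \<Rightarrow> 'n::finite \<Rightarrow> 'a::comm_ring_1) \<Rightarrow> ('n \<Rightarrow> 'a) set \<Rightarrow> bool" where
  "generator_matrix G C \<longleftrightarrow> row_span G = C"

definition parity_check_matrix :: "('r::finite \<Rightarrow> 'n::finite \<Rightarrow> 'a::comm_ring_1) \<Rightarrow> ('n \<Rightarrow> 'a) set \<Rightarrow> bool" where
  "parity_check_matrix H C \<longleftrightarrow> row_span H = dual_code C"

definition rank_q :: "nat \<Rightarrow> ('r::finite \<Rightarrow> 'c \<Rightarrow> 'a::comm_ring_1) \<Rightarrow> real" where
  "rank_q q A = log (real q) (real (card (row_span A)))"

definition mult_transpose :: "('r1 \<Rightarrow> 'n::finite \<Rightarrow> 'a::comm_ring_1) \<Rightarrow> ('r2 \<Rightarrow> 'n \<Rightarrow> 'a) \<Rightarrow> 'r1 \<Rightarrow> 'r2 \<Rightarrow> 'a" where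
  "mult_transpose A B = (\<lambda>i k. \<Sum>j\<in>UNIV. A i j * B k j)"

end

theory Submission
  imports Defs "HOL-Library.Function_Algebras" "HOL-Library.Product_Plus" "HOL-Library.Cardinality"
begin


lemma card_hom:
  fixes f :: "'b::ab_group_add \<Rightarrow> 'c::ab_group_add"
  assumes fin: "finite A" and z: "0 \<in> A"
    and add: "\<And>x y. x \<in> A \<Longrightarrow> y \<in> A \<Longrightarrow> x + y \<in> A"
    and neg: "\<And>x. x \<in> A \<Longrightarrow> - x \<in> A"
    and hom: "\<And>x y. x \<in> A \<Longrightarrow> y \<in> A \<Longrightarrow> f (x + y) = f x + f y"
  shows "card A = card {x\<in>A. f x = 0} * card (f ` A)"
proof -
  let ?K = "{x\<in>A. f x = 0}"
  have f0: "f 0 = 0" using hom[OF z z] by simp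
  have fneg: "f (- x) = - f x" if "x \<in> A" for x
    using hom[OF that neg[OF that]] f0 by (simp add: eq_neg_iff_add_eq_0 add.commute)
  have A_eq: "A = (\<Union>b\<in>f ` A. {x\<in>A. f x = b})" by auto
  have fib: "card {x\<in>A. f x = b} = card ?K" if hb: "b \<in> f ` A" for b
  proof -
    obtain a0 where a0: "a0 \<in> A" "b = f a0" using hb by auto
    have "{x\<in>A. f x = b} = (\<lambda>k. a0 + k) ` ?K"
    proof (rule set_eqI, rule iffI)
      fix x assume x: "x \<in> {x\<in>A. f x = b}"
      hence xA: "x \<in> A" and fx: "f x = f a0" using a0 by auto
      have m: "- a0 \<in> A" using neg a0 by auto
      have "f (- a0 + x) = 0" using hom[OF m xA] fneg[OF a0(1)] fx by simp
      hence "- a0 + x \<in> ?K" using add[OF m xA] by auto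
      moreover have "x = a0 + (- a0 + x)" by simp
      ultimately show "x \<in> (\<lambda>k. a0 + k) ` ?K" by blast
    next
      fix x assume "x \<in> (\<lambda>k. a0 + k) ` ?K"
      then obtain k where "k \<in> ?K" "x = a0 + k" by auto
      thus "x \<in> {x\<in>A. f x = b}" using a0 add hom by auto
    qed
    moreover have "inj_on (\<lambda>k. a0 + k) ?K" by (auto simp: inj_on_def)
    ultimately show ?thesis by (simp add: card_image)
  qed
  have "card A = (\<Sum>b\<in>f ` A. card {x\<in>A. f x = b})"
    by (subst A_eq, rule card_UN_disjoint) (use fin in auto)
  also have "\<dots> = (\<Sum>b\<in>f ` A. card ?K)" using fib by simp
  also have "\<dots> = card ?K * card (f ` A)" by simp
  finally show ?thesis .
qed


lemma lf_local: "local_frobenius TYPE('a::comm_ring_1) \<Longrightarrow> local_ring TYPE('a)"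
  by (simp add: local_frobenius_def)

lemma max_ideal_M:
  assumes "local_ring TYPE('a::comm_ring_1)"
  shows "maximal_ideal (the_max_ideal TYPE('a))"
  using assms unfolding local_ring_def the_max_ideal_def by (rule theI')

lemma max_unique:
  assumes "local_ring TYPE('a::comm_ring_1)" "maximal_ideal (J::'a set)"
  shows "J = the_max_ideal TYPE('a)"
  using assms max_ideal_M[OF assms(1)] unfolding local_ring_def by blast

lemma M_ideal:
  assumes "local_ring TYPE('a::comm_ring_1)"
  shows "is_ideal (the_max_ideal TYPE('a))" and "the_max_ideal TYPE('a) \<noteq> UNIV"
  using max_ideal_M[OF assms] unfolding maximal_ideal_def by blast+

lemma M_props:
  assumes "local_ring TYPE('a::comm_ring_1)"
  shows "0 \<in> the_max_ideal TYPE('a)"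
    and "\<And>x y. x \<in> the_max_ideal TYPE('a) \<Longrightarrow> y \<in> the_max_ideal TYPE('a) \<Longrightarrow> x + y \<in> the_max_ideal TYPE('a)"
    and "\<And>r x. x \<in> the_max_ideal TYPE('a) \<Longrightarrow> r * x \<in> the_max_ideal TYPE('a)"
    and "(1::'a) \<notin> the_max_ideal TYPE('a)"
proof -
  note i = M_ideal(1)[OF assms, unfolded is_ideal_def]
  note i1 = conjunct1[OF i] and i2 = conjunct1[OF conjunct2[OF i]] and i3 = conjunct2[OF conjunct2[OF i]]
  show "0 \<in> the_max_ideal TYPE('a)" using i1 .
  show "\<And>x y. x \<in> the_max_ideal TYPE('a) \<Longrightarrow> y \<in> the_max_ideal TYPE('a) \<Longrightarrow> x + y \<in> the_max_ideal TYPE('a)"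
    using i2 by blast
  show "\<And>r x. x \<in> the_max_ideal TYPE('a) \<Longrightarrow> r * x \<in> the_max_ideal TYPE('a)"
    using i3 by blast
  show "(1::'a) \<notin> the_max_ideal TYPE('a)"
  proof
    assume o: "(1::'a) \<in> the_max_ideal TYPE('a)"
    have "r \<in> the_max_ideal TYPE('a)" for r
      using i3 o by (metis mult.right_neutral)
    hence "the_max_ideal TYPE('a) = UNIV" by auto
    thus False using M_ideal(2)[OF assms] by simp
  qed
qed

lemma M_minus:
  assumes "local_ring TYPE('a::comm_ring_1)" "(x::'a) \<in> the_max_ideal TYPE('a)"
  shows "- x \<in> the_max_ideal TYPE('a)"
  using M_props(3)[OF assms(1) assms(2), of "-1"] by simp

lemma ideal_above_M:
  assumes "local_ring TYPE('a::comm_ring_1)" "is_ideal (J::'a set)"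
    "the_max_ideal TYPE('a) \<subseteq> J" "(1::'a) \<notin> J"
  shows "J = the_max_ideal TYPE('a)"
proof -
  have "J \<noteq> UNIV" using assms(4) by auto
  thus ?thesis using max_ideal_M[OF assms(1)] assms(2,3) unfolding maximal_ideal_def by blast
qed

lemma nonunit_in_M:
  fixes x :: "'a::{comm_ring_1,finite}"
  assumes loc: "local_ring TYPE('a)" and nu: "\<not> (\<exists>y. x * y = 1)"
  shows "x \<in> the_max_ideal TYPE('a)"
proof -
  let ?P = "{J::'a set. is_ideal J \<and> (1::'a) \<notin> J \<and> x \<in> J}"
  have "{r * x |r. True} \<in> ?P"
  proof -
    have "is_ideal {r * x |r. True}" unfolding is_ideal_def
    proof (intro conjI ballI allI)
      show "0 \<in> {r * x |r. True}" by (rule CollectI, rule exI[of _ 0]) simp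
      fix a b assume "a \<in> {r * x |r. True}" "b \<in> {r * x |r. True}"
      then obtain r s where "a = r * x" "b = s * x" by auto
      thus "a + b \<in> {r * x |r. True}" by (auto simp: distrib_right intro!: exI[of _ "r + s"])
    next
      fix t a assume "a \<in> {r * x |r. True}"
      then obtain r where "a = r * x" by auto
      thus "t * a \<in> {r * x |r. True}" by (auto intro!: exI[of _ "t * r"])
    qed
    moreover have "(1::'a) \<notin> {r * x |r. True}" using nu by (auto simp: mult.commute)
    moreover have "x \<in> {r * x |r. True}" by (auto intro!: exI[of _ 1])
    ultimately show ?thesis by simp
  qed
  hence ne: "?P \<noteq> {}" by blast
  have fin: "finite ?P" by simp
  define m where "m = Max (card ` ?P)"
  have "m \<in> card ` ?P" unfolding m_def using ne fin by (intro Max_in) auto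
  then obtain J where J: "J \<in> ?P" "card J = m" by auto
  have big: "card K \<le> card J" if "K \<in> ?P" for K
  proof -
    have "card K \<le> Max (card ` ?P)" by (rule Max_ge) (use fin that in auto)
    thus ?thesis using J(2) unfolding m_def by simp
  qed
  have "maximal_ideal J"
    unfolding maximal_ideal_def
  proof (intro conjI allI impI)
    show "is_ideal J" using J by auto
    show "J \<noteq> UNIV" using J by auto
    fix K assume K: "is_ideal K \<and> J \<subseteq> K"
    show "K = J \<or> K = UNIV"
    proof (cases "(1::'a) \<in> K")
      case True
      have "r \<in> K" for r using K True unfolding is_ideal_def by (metis mult.right_neutral)
      thus ?thesis by auto
    next
      case False
      hence "K \<in> ?P" using K J by auto
      hence "card K \<le> card J" by (rule big)
      hence "K = J" using K by (metis card_seteq finite)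
      thus ?thesis by simp
    qed
  qed
  hence "J = the_max_ideal TYPE('a)" by (rule max_unique[OF loc])
  thus ?thesis using J by auto
qed

lemma one_minus_unit:
  fixes a :: "'a::{comm_ring_1,finite}"
  assumes loc: "local_ring TYPE('a)" and a: "a \<in> the_max_ideal TYPE('a)"
  shows "\<exists>v. v * (1 - a) = 1"
proof (rule ccontr)
  assume "\<not> (\<exists>v. v * (1 - a) = 1)"
  hence "\<not> (\<exists>v. (1 - a) * v = 1)" by (simp add: mult.commute)
  hence "1 - a \<in> the_max_ideal TYPE('a)" by (rule nonunit_in_M[OF loc])
  hence "(1 - a) + a \<in> the_max_ideal TYPE('a)" using M_props(2)[OF loc] a by blast
  thus False using M_props(4)[OF loc] by simp
qed



definition smul :: "'a::comm_ring_1 \<Rightarrow> ('n \<Rightarrow> 'a) \<Rightarrow> ('n \<Rightarrow> 'a)" where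
  "smul r x = (\<lambda>j. r * x j)"

definition dot :: "('n::finite \<Rightarrow> 'a::comm_ring_1) \<Rightarrow> ('n \<Rightarrow> 'a) \<Rightarrow> 'a" where
  "dot u x = (\<Sum>j\<in>UNIV. u j * x j)"

lemma smul_simps:
  "smul r (x + y) = smul r x + smul r y"
  "smul (r + s) x = smul r x + smul s x"
  "smul r (smul s x) = smul (r * s) x"
  "smul 1 x = x" "smul 0 x = 0" "smul r 0 = 0"
  "smul (-1) x = - x"
  by (auto simp: smul_def fun_eq_iff algebra_simps)

lemma dot_simps:
  "dot u (x + y) = dot u x + dot u y"
  "dot u (smul r x) = r * dot u x"
  "dot u 0 = 0"
  "dot u (- x) = - dot u x"
  by (auto simp: dot_def smul_def sum.distrib sum_distrib_left algebra_simps sum_negf)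

lemma dot_left_simps:
  "dot (u + v) x = dot u x + dot v x"
  "dot (smul r u) x = r * dot u x"
  "dot 0 x = 0"
  by (auto simp: dot_def smul_def sum.distrib sum_distrib_left algebra_simps)

lemma lc_iff:
  "linear_code C \<longleftrightarrow> 0 \<in> C \<and> (\<forall>x\<in>C. \<forall>y\<in>C. x + y \<in> C) \<and> (\<forall>r. \<forall>x\<in>C. smul r x \<in> C)"
  by (simp add: linear_code_def smul_def plus_fun_def zero_fun_def)

lemma lcD:
  assumes "linear_code C"
  shows "0 \<in> C" "\<And>x y. x \<in> C \<Longrightarrow> y \<in> C \<Longrightarrow> x + y \<in> C"
    "\<And>r x. x \<in> C \<Longrightarrow> smul r x \<in> C" "\<And>x. x \<in> C \<Longrightarrow> - x \<in> C"
proof -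
  note l = assms[unfolded lc_iff]
  show "0 \<in> C" using l by blast
  show "\<And>x y. x \<in> C \<Longrightarrow> y \<in> C \<Longrightarrow> x + y \<in> C" using l by blast
  show s: "\<And>r x. x \<in> C \<Longrightarrow> smul r x \<in> C" using l by blast
  show "\<And>x. x \<in> C \<Longrightarrow> - x \<in> C" using s[of _ "-1"] by (simp add: smul_simps)
qed

lemma lcI:
  assumes "0 \<in> C" "\<And>x y. x \<in> C \<Longrightarrow> y \<in> C \<Longrightarrow> x + y \<in> C"
    "\<And>r x. x \<in> C \<Longrightarrow> smul r x \<in> C"
  shows "linear_code C"
  using assms unfolding lc_iff by blast

lemma dual_iff: "dual_code C = {u. \<forall>c\<in>C. dot u c = 0}"
  by (simp add: dual_code_def dot_def)

lemma dual_lc: "linear_code (dual_code (C::('n::finite \<Rightarrow> 'a::comm_ring_1) set))"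
  by (rule lcI) (auto simp: dual_iff dot_left_simps)

lemma dual_UNIV: "dual_code (UNIV::('n::finite \<Rightarrow> 'a::comm_ring_1) set) = {0}"
proof -
  have "u = 0" if "u \<in> dual_code (UNIV::('n \<Rightarrow> 'a) set)" for u
  proof
    fix k
    have "dot u (\<lambda>j. if j = k then 1 else 0) = 0" using that by (simp add: dual_iff)
    thus "u k = 0 k" by (simp add: dot_def if_distrib cong: if_cong)
  qed
  moreover have "(0::'n\<Rightarrow>'a) \<in> dual_code UNIV" by (simp add: dual_iff dot_simps dot_left_simps)
  ultimately show ?thesis by blast
qed

lemma dual_zero: "dual_code {0::'n::finite \<Rightarrow> 'a::comm_ring_1} = UNIV"
  by (simp add: dual_iff dot_simps dot_left_simps)

lemma card_S_M:
  assumes lf: "local_frobenius TYPE('a::{comm_ring_1,finite})"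
  shows "card (socle TYPE('a)) * card (the_max_ideal TYPE('a)) = card (UNIV::'a set)"
proof -
  have loc: "local_ring TYPE('a)" using lf by (simp add: local_frobenius_def)
  have mi: "minimal_ideal (socle TYPE('a))" using lf by (simp add: local_frobenius_def)
  hence "socle TYPE('a) \<noteq> {0}" and Sid: "is_ideal (socle TYPE('a))"
    by (auto simp: minimal_ideal_def)
  moreover have "0 \<in> socle TYPE('a)" by (simp add: socle_def)
  ultimately obtain s where s: "s \<in> socle TYPE('a)" "s \<noteq> 0" by blast
  let ?f = "\<lambda>r::'a. r * s"
  have "card (UNIV::'a set) = card {x\<in>UNIV. ?f x = 0} * card (?f ` UNIV)"
    by (rule card_hom) (auto simp: distrib_right)
  moreover have "{x\<in>UNIV. ?f x = 0} = the_max_ideal TYPE('a)"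
  proof (rule ideal_above_M[OF loc])
    show "is_ideal {x \<in> UNIV. x * s = 0}" by (auto simp: is_ideal_def distrib_right mult.assoc)
    show "the_max_ideal TYPE('a) \<subseteq> {x \<in> UNIV. x * s = 0}"
      using s(1) by (auto simp: socle_def mult.commute)
    show "1 \<notin> {x \<in> UNIV. x * s = 0}" using s(2) by simp
  qed
  moreover have "?f ` UNIV = socle TYPE('a)"
  proof -
    have "is_ideal (?f ` UNIV)"
      unfolding is_ideal_def
    proof (intro conjI ballI allI)
      show "0 \<in> range ?f" by (rule image_eqI[of _ _ 0]) auto
      fix x y assume "x \<in> range ?f" "y \<in> range ?f"
      then obtain a b where "x = a * s" "y = b * s" by auto
      thus "x + y \<in> range ?f" by (auto intro!: image_eqI[of _ _ "a + b"] simp: distrib_right)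
    next
      fix r x assume "x \<in> range ?f"
      then obtain a where "x = a * s" by auto
      thus "r * x \<in> range ?f" by (auto intro!: image_eqI[of _ _ "r * a"] simp: mult.assoc)
    qed
    moreover have "?f ` UNIV \<subseteq> socle TYPE('a)"
      using s(1) by (auto simp: socle_def mult.assoc)
    moreover have "?f ` UNIV \<noteq> {0}" using s(2) by (metis mult_1 rangeI singletonD)
    ultimately show ?thesis using mi unfolding minimal_ideal_def by blast
  qed
  ultimately show ?thesis by (simp add: mult.commute)
qed


lemma step:
  fixes C :: "('n::finite \<Rightarrow> 'a::{comm_ring_1,finite}) set"
  assumes lf: "local_frobenius TYPE('a)"
    and lc: "linear_code C" and xC: "x \<notin> C"
    and Mx: "\<And>a. a \<in> the_max_ideal TYPE('a) \<Longrightarrow> smul a x \<in> C"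
    and D: "D = {c + smul r x |c r. c \<in> C}"
  shows "card C * card (dual_code C) \<le> card D * card (dual_code D)"
proof -
  have loc: "local_ring TYPE('a)" using lf by (simp add: local_frobenius_def)
  let ?M = "the_max_ideal TYPE('a)"
  let ?S = "socle TYPE('a)"
  note l = lcD[OF lc]
  have idl: "{r. smul r x \<in> C} = ?M"
  proof (rule ideal_above_M[OF loc])
    show "is_ideal {r. smul r x \<in> C}" unfolding is_ideal_def
    proof (intro conjI ballI allI)
      show "0 \<in> {r. smul r x \<in> C}" using l by (simp add: smul_simps)
      fix a b assume "a \<in> {r. smul r x \<in> C}" "b \<in> {r. smul r x \<in> C}"
      thus "a + b \<in> {r. smul r x \<in> C}" using l(2) by (simp add: smul_simps)
    next
      fix t a assume "a \<in> {r. smul r x \<in> C}"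
      hence "smul t (smul a x) \<in> C" using l(3) by simp
      thus "t * a \<in> {r. smul r x \<in> C}" by (simp add: smul_simps)
    qed
    show "?M \<subseteq> {r. smul r x \<in> C}" using Mx by auto
    show "1 \<notin> {r. smul r x \<in> C}" using xC by (simp add: smul_simps)
  qed
  let ?A = "(UNIV::'a set) \<times> C"
  let ?f = "\<lambda>(r, c). smul r x + c"
  have "card ?A = card {p\<in>?A. ?f p = 0} * card (?f ` ?A)"
  proof (rule card_hom)
    show "finite ?A" by simp
    show "0 \<in> ?A" using l by (simp add: zero_prod_def)
    show "\<And>p q. p \<in> ?A \<Longrightarrow> q \<in> ?A \<Longrightarrow> p + q \<in> ?A" using l by (auto simp: plus_prod_def)
    show "\<And>p. p \<in> ?A \<Longrightarrow> - p \<in> ?A" using l by (auto simp: uminus_prod_def)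
    show "\<And>p q. p \<in> ?A \<Longrightarrow> q \<in> ?A \<Longrightarrow> ?f (p + q) = ?f p + ?f q"
      by (auto simp: plus_prod_def smul_simps algebra_simps)
  qed
  moreover have "?f ` ?A = D" unfolding D by force
  moreover have "card {p\<in>?A. ?f p = 0} = card ?M"
  proof -
    have inj: "inj_on fst {p\<in>?A. ?f p = 0}"
      by (auto simp: inj_on_def) (metis add_left_cancel)
    moreover have img: "fst ` {p\<in>?A. ?f p = 0} = ?M"
    proof
      show "fst ` {p\<in>?A. ?f p = 0} \<subseteq> ?M"
      proof
        fix r assume "r \<in> fst ` {p\<in>?A. ?f p = 0}"
        then obtain c where c: "c \<in> C" "smul r x + c = 0" by force
        hence "smul r x = - c" by (simp add: eq_neg_iff_add_eq_0)
        hence "smul r x \<in> C" using l(4)[OF c(1)] by simp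
        thus "r \<in> ?M" using idl by auto
      qed
      show "?M \<subseteq> fst ` {p\<in>?A. ?f p = 0}"
      proof
        fix r assume "r \<in> ?M"
        hence "smul r x \<in> C" using idl by auto
        hence "(r, - smul r x) \<in> {p\<in>?A. ?f p = 0}" using l by auto
        thus "r \<in> fst ` {p\<in>?A. ?f p = 0}" by force
      qed
    qed
    ultimately show ?thesis using card_image[OF inj] by simp
  qed
  ultimately have "CARD('a) * card C = card ?M * card D" by (simp add: card_cartesian_product)
  hence eqn: "card ?S * card ?M * card C = card ?M * card D" using card_S_M[OF lf] by simp
  have Mpos: "card ?M > 0" using M_props(1)[OF loc] by (auto simp: card_gt_0_iff)
  have e: "card ?M * (card ?S * card C) = card ?M * card D" using eqn by (metis mult.assoc mult.commute)
  have "card ?S * card C = card D"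
    using mult_left_cancel[of "card ?M" "card ?S * card C" "card D"] e Mpos by linarith
  hence cD: "card D = card ?S * card C" by simp
  let ?g = "\<lambda>u. dot u x"
  note dl = lcD[OF dual_lc[of C]]
  have "card (dual_code C) = card {u\<in>dual_code C. ?g u = 0} * card (?g ` dual_code C)"
    by (rule card_hom) (use dl in \<open>auto simp: dot_left_simps\<close>)
  moreover have "{u\<in>dual_code C. ?g u = 0} = dual_code D"
  proof
    show "{u\<in>dual_code C. ?g u = 0} \<subseteq> dual_code D"
      unfolding D by (auto simp: dual_iff dot_simps)
    show "dual_code D \<subseteq> {u\<in>dual_code C. ?g u = 0}"
    proof
      fix u assume u: "u \<in> dual_code D"
      have "c \<in> D" if "c \<in> C" for c
      proof -
        have "c = c + smul 0 x" by (simp add: smul_simps)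
        thus ?thesis unfolding D using that by blast
      qed
      moreover have "x \<in> D"
      proof -
        have "x = 0 + smul 1 x" by (simp add: smul_simps)
        thus ?thesis unfolding D using l(1) by blast
      qed
      ultimately show "u \<in> {u\<in>dual_code C. ?g u = 0}" using u by (auto simp: dual_iff)
    qed
  qed
  moreover have "?g ` dual_code C \<subseteq> ?S"
  proof
    fix y assume "y \<in> ?g ` dual_code C"
    then obtain u where u: "u \<in> dual_code C" "y = dot u x" by auto
    have "y * m = 0" if "m \<in> ?M" for m
    proof -
      have "y * m = dot u (smul m x)" using u(2) by (simp add: dot_simps mult.commute)
      also have "\<dots> = 0" using u(1) Mx[OF that] by (auto simp: dual_iff)
      finally show ?thesis .
    qed
    thus "y \<in> ?S" by (simp add: socle_def)
  qed
  hence "card (?g ` dual_code C) \<le> card ?S" by (intro card_mono) auto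
  ultimately have "card (dual_code C) \<le> card (dual_code D) * card ?S" by simp
  hence "card C * card (dual_code C) \<le> card C * (card (dual_code D) * card ?S)" by simp
  also have "\<dots> = card D * card (dual_code D)" using cD by simp
  finally show ?thesis .
qed

lemma simple_step:
  fixes C D :: "('n::finite \<Rightarrow> 'a::{comm_ring_1,finite}) set"
  assumes loc: "local_ring TYPE('a)"
    and lC: "linear_code C" and lD: "linear_code D" and sub: "C \<subseteq> D"
    and x: "x \<in> D" "x \<notin> C"
    and ext: "\<And>E. linear_code E \<Longrightarrow> C \<subseteq> E \<Longrightarrow> E \<subseteq> D \<Longrightarrow> E = C \<or> E = D"
  shows "\<And>a. a \<in> the_max_ideal TYPE('a) \<Longrightarrow> smul a x \<in> C"
    and "D = {c + smul r x |c r. c \<in> C}"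
proof -
  let ?M = "the_max_ideal TYPE('a)"
  note l = lcD[OF lC] and lD' = lcD[OF lD]
  let ?E1 = "{c + smul r x |c r. c \<in> C}"
  have "linear_code ?E1"
  proof (rule lcI)
    show "0 \<in> ?E1" using l by (auto intro!: exI[of _ 0] simp: smul_simps)
    fix y z assume "y \<in> ?E1" "z \<in> ?E1"
    then obtain c r d s where "c \<in> C" "d \<in> C" "y = c + smul r x" "z = d + smul s x" by auto
    thus "y + z \<in> ?E1" using l
      by (auto intro!: exI[of _ "c + d"] exI[of _ "r + s"] simp: smul_simps algebra_simps)
  next
    fix t y assume "y \<in> ?E1"
    then obtain c r where "c \<in> C" "y = c + smul r x" by auto
    thus "smul t y \<in> ?E1" using l
      by (auto intro!: exI[of _ "smul t c"] exI[of _ "t * r"] simp: smul_simps)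
  qed
  moreover have "C \<subseteq> ?E1"
  proof
    fix c assume "c \<in> C"
    moreover have "c = c + smul 0 x" by (simp add: smul_simps)
    ultimately show "c \<in> ?E1" by blast
  qed
  moreover have "?E1 \<subseteq> D" using sub x lD' by auto
  moreover have "x \<in> ?E1"
  proof -
    have "x = 0 + smul 1 x" by (simp add: smul_simps)
    thus ?thesis using l(1) by blast
  qed
  ultimately show "D = ?E1" using ext x(2) by blast
  let ?E2 = "{c + smul a x |c a. c \<in> C \<and> a \<in> ?M}"
  note m = M_props[OF loc]
  have "linear_code ?E2"
  proof (rule lcI)
    show "0 \<in> ?E2" using l m by (auto intro!: exI[of _ 0] simp: smul_simps)
    fix y z assume "y \<in> ?E2" "z \<in> ?E2"
    then obtain c r d s where "c \<in> C" "d \<in> C" "r \<in> ?M" "s \<in> ?M" "y = c + smul r x" "z = d + smul s x" by auto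
    thus "y + z \<in> ?E2" using l m
      by (auto intro!: exI[of _ "c + d"] exI[of _ "r + s"] simp: smul_simps algebra_simps)
  next
    fix t y assume "y \<in> ?E2"
    then obtain c r where "c \<in> C" "r \<in> ?M" "y = c + smul r x" by auto
    thus "smul t y \<in> ?E2" using l m
      by (auto intro!: exI[of _ "smul t c"] exI[of _ "t * r"] simp: smul_simps)
  qed
  moreover have "C \<subseteq> ?E2"
  proof
    fix c assume "c \<in> C"
    moreover have "c = c + smul 0 x" by (simp add: smul_simps)
    ultimately show "c \<in> ?E2" using m(1) by blast
  qed
  moreover have "?E2 \<subseteq> D" using sub x lD' by auto
  moreover have "x \<notin> ?E2"
  proof
    assume "x \<in> ?E2"
    then obtain c a where ca: "c \<in> C" "a \<in> ?M" "x = c + smul a x" by auto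
    hence "smul (1 - a) x = c" by (simp add: smul_def fun_eq_iff algebra_simps)
    moreover obtain v where "v * (1 - a) = 1" using one_minus_unit[OF loc ca(2)] by blast
    ultimately have "x = smul v c" by (metis smul_simps(3,4))
    thus False using l(3)[OF ca(1)] x(2) by simp
  qed
  ultimately have "?E2 = C" using ext x(1) by blast
  thus "\<And>a. a \<in> ?M \<Longrightarrow> smul a x \<in> C"
  proof -
    fix a assume "a \<in> ?M"
    hence "0 + smul a x \<in> ?E2" using l(1) by blast
    thus "smul a x \<in> C" using \<open>?E2 = C\<close> by simp
  qed
qed



lemma lc_zero_code: "linear_code {0::'n::finite \<Rightarrow> 'a::comm_ring_1}"
  by (rule lcI) (auto simp: smul_simps)

lemma lc_UNIV: "linear_code (UNIV::('n::finite \<Rightarrow> 'a::comm_ring_1) set)"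
  by (rule lcI) auto

lemma lower:
  fixes C :: "('n::finite \<Rightarrow> 'a::{comm_ring_1,finite}) set"
  assumes lf: "local_frobenius TYPE('a)" and lc: "linear_code C"
  shows "CARD('n \<Rightarrow> 'a) \<le> card C * card (dual_code C)"
  using lc
proof (induction "card C" arbitrary: C rule: less_induct)
  case less
  have loc: "local_ring TYPE('a)" using lf by (simp add: local_frobenius_def)
  show ?case
  proof (cases "C = {0}")
    case True thus ?thesis by (simp add: dual_zero)
  next
    case False
    let ?P = "{E. linear_code E \<and> E \<subseteq> C \<and> E \<noteq> C}"
    have "{0} \<in> ?P" using False lcD(1)[OF less.prems] lc_zero_code by auto
    hence ne: "?P \<noteq> {}" by blast
    have fin: "finite ?P" by simp
    define m where "m = Max (card ` ?P)"
    have "m \<in> card ` ?P" unfolding m_def using ne fin by (intro Max_in) auto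
    then obtain C0 where C0: "C0 \<in> ?P" "card C0 = m" by auto
    have big: "card K \<le> card C0" if "K \<in> ?P" for K
    proof -
      have "card K \<le> Max (card ` ?P)" by (rule Max_ge) (use fin that in auto)
      thus ?thesis using C0(2) unfolding m_def by simp
    qed
    obtain x where x: "x \<in> C" "x \<notin> C0" using C0(1) by auto
    have ext: "E = C0 \<or> E = C" if "linear_code E" "C0 \<subseteq> E" "E \<subseteq> C" for E
    proof (cases "E = C")
      case False
      hence "E \<in> ?P" using that by auto
      hence "card E \<le> card C0" by (rule big)
      hence "E = C0" using that(2) by (metis card_seteq finite)
      thus ?thesis by simp
    qed simp
    have lC0: "linear_code C0" and sub: "C0 \<subseteq> C" using C0(1) by auto
    note ss = simple_step[OF loc lC0 less.prems sub x ext]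
    have st: "card C0 * card (dual_code C0) \<le> card C * card (dual_code C)"
      by (rule step[OF lf lC0 x(2) ss(1) ss(2)]) auto
    have "card C0 < card C" using C0(1) by (intro psubset_card_mono) auto
    hence "CARD('n \<Rightarrow> 'a) \<le> card C0 * card (dual_code C0)" using less.hyps lC0 by blast
    thus ?thesis using st by linarith
  qed
qed

lemma upper:
  fixes C :: "('n::finite \<Rightarrow> 'a::{comm_ring_1,finite}) set"
  assumes lf: "local_frobenius TYPE('a)" and lc: "linear_code C"
  shows "card C * card (dual_code C) \<le> CARD('n \<Rightarrow> 'a)"
  using lc
proof (induction "CARD('n \<Rightarrow> 'a) - card C" arbitrary: C rule: less_induct)
  case less
  have loc: "local_ring TYPE('a)" using lf by (simp add: local_frobenius_def)
  show ?case
  proof (cases "C = UNIV")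
    case True thus ?thesis by (simp add: dual_UNIV)
  next
    case False
    let ?P = "{E. linear_code E \<and> C \<subseteq> E \<and> E \<noteq> C}"
    have "UNIV \<in> ?P" using False lc_UNIV by auto
    hence ne: "?P \<noteq> {}" by blast
    have fin: "finite ?P" by simp
    define m where "m = Min (card ` ?P)"
    have "m \<in> card ` ?P" unfolding m_def using ne fin by (intro Min_in) auto
    then obtain D where D: "D \<in> ?P" "card D = m" by auto
    have small: "card D \<le> card K" if "K \<in> ?P" for K
    proof -
      have "Min (card ` ?P) \<le> card K" by (rule Min_le) (use fin that in auto)
      thus ?thesis using D(2) unfolding m_def by simp
    qed
    have lD: "linear_code D" and sub: "C \<subseteq> D" using D(1) by auto
    obtain x where x: "x \<in> D" "x \<notin> C" using D(1) by auto
    have ext: "E = C \<or> E = D" if "linear_code E" "C \<subseteq> E" "E \<subseteq> D" for E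
    proof (cases "E = C")
      case False
      hence "E \<in> ?P" using that by auto
      hence "card D \<le> card E" by (rule small)
      hence "E = D" using that(3) by (metis card_seteq finite)
      thus ?thesis by simp
    qed simp
    note ss = simple_step[OF loc less.prems lD sub x ext]
    have st: "card C * card (dual_code C) \<le> card D * card (dual_code D)"
      by (rule step[OF lf less.prems x(2) ss(1) ss(2)]) auto
    have c1: "card C < card D" using D(1) by (intro psubset_card_mono) auto
    have c2: "card D \<le> CARD('n \<Rightarrow> 'a)" by (rule card_mono) auto
    have "CARD('n \<Rightarrow> 'a) - card D < CARD('n \<Rightarrow> 'a) - card C" using c1 c2 by linarith
    hence "card D * card (dual_code D) \<le> CARD('n \<Rightarrow> 'a)" using less.hyps lD by blast
    thus ?thesis using st by linarith
  qed
qed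

lemma duality:
  fixes C :: "('n::finite \<Rightarrow> 'a::{comm_ring_1,finite}) set"
  assumes lf: "local_frobenius TYPE('a)" and lc: "linear_code C"
  shows "card C * card (dual_code C) = CARD('n \<Rightarrow> 'a)"
  using lower[OF assms] upper[OF assms] by linarith



lemma rs_mt:
  fixes C D :: "('n::finite \<Rightarrow> 'a::{comm_ring_1,finite}) set"
    and G :: "'r::finite \<Rightarrow> 'n \<Rightarrow> 'a" and H :: "'s::finite \<Rightarrow> 'n \<Rightarrow> 'a"
  assumes G: "generator_matrix G C" and H: "parity_check_matrix H D"
    and sum: "code_sum C D = UNIV"
  shows "card (row_span (mult_transpose H G)) = card (dual_code D)"
proof -
  let ?f = "\<lambda>u. (\<lambda>k. dot u (G k))"
  note dl = lcD[OF dual_lc[of D]]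
  have "card (dual_code D) = card {u\<in>dual_code D. ?f u = 0} * card (?f ` dual_code D)"
    by (rule card_hom) (use dl in \<open>auto simp: dot_left_simps fun_eq_iff\<close>)
  moreover have "{u\<in>dual_code D. ?f u = 0} = {0}"
  proof -
    have "u = 0" if u: "u \<in> dual_code D" "?f u = 0" for u
    proof -
      have uC: "dot u c = 0" if "c \<in> C" for c
      proof -
        from that G obtain coef where c: "c = (\<lambda>j. \<Sum>i\<in>UNIV. coef i * G i j)"
          by (auto simp: generator_matrix_def row_span_def)
        have "dot u c = (\<Sum>j\<in>UNIV. \<Sum>i\<in>UNIV. u j * (coef i * G i j))"
          unfolding c dot_def by (simp add: sum_distrib_left)
        also have "\<dots> = (\<Sum>i\<in>UNIV. \<Sum>j\<in>UNIV. u j * (coef i * G i j))" by (rule sum.swap)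
        also have "\<dots> = (\<Sum>i\<in>UNIV. coef i * dot u (G i))"
          unfolding dot_def by (simp add: sum_distrib_left mult.left_commute)
        also have "\<dots> = 0" using u(2) by (simp add: fun_eq_iff)
        finally show ?thesis .
      qed
      have "u \<in> dual_code UNIV"
      proof -
        have "dot u z = 0" for z
        proof -
          have "z \<in> code_sum C D" using sum by simp
          then obtain x y where "x \<in> C" "y \<in> D" "z = (\<lambda>j. x j + y j)" by (auto simp: code_sum_def)
          hence "z = x + y" "dot u x = 0" "dot u y = 0" using uC u(1)
            by (auto simp: plus_fun_def dual_iff)
          thus ?thesis by (simp add: dot_simps)
        qed
        thus ?thesis by (simp add: dual_iff)
      qed
      thus ?thesis by (simp add: dual_UNIV)
    qed
    moreover have "0 \<in> dual_code D" using dl by simp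
    ultimately show ?thesis by (auto simp: dot_left_simps fun_eq_iff)
  qed
  moreover have "?f ` dual_code D = row_span (mult_transpose H G)"
  proof -
    have key: "?f (\<lambda>j. \<Sum>i\<in>UNIV. coef i * H i j) = (\<lambda>k. \<Sum>i\<in>UNIV. coef i * mult_transpose H G i k)" for coef
    proof
      fix k
      have "?f (\<lambda>j. \<Sum>i\<in>UNIV. coef i * H i j) k = (\<Sum>j\<in>UNIV. \<Sum>i\<in>UNIV. coef i * H i j * G k j)"
        unfolding dot_def by (simp add: sum_distrib_right)
      also have "\<dots> = (\<Sum>i\<in>UNIV. \<Sum>j\<in>UNIV. coef i * H i j * G k j)" by (rule sum.swap)
      also have "\<dots> = (\<Sum>i\<in>UNIV. coef i * mult_transpose H G i k)"
        unfolding mult_transpose_def by (simp add: sum_distrib_left mult.assoc)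
      finally show "?f (\<lambda>j. \<Sum>i\<in>UNIV. coef i * H i j) k = (\<lambda>k. \<Sum>i\<in>UNIV. coef i * mult_transpose H G i k) k" by simp
    qed
    have dH: "dual_code D = row_span H" using H by (simp add: parity_check_matrix_def)
    have "?f ` row_span H = row_span (mult_transpose H G)"
    proof
      show "?f ` row_span H \<subseteq> row_span (mult_transpose H G)"
      proof
        fix y assume "y \<in> ?f ` row_span H"
        then obtain u where u: "u \<in> row_span H" "y = ?f u" by blast
        from u(1) obtain coef where "u = (\<lambda>j. \<Sum>i\<in>UNIV. coef i * H i j)"
          unfolding row_span_def by blast
        hence "y = (\<lambda>k. \<Sum>i\<in>UNIV. coef i * mult_transpose H G i k)" using u(2) key by simp
        thus "y \<in> row_span (mult_transpose H G)" unfolding row_span_def by blast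
      qed
      show "row_span (mult_transpose H G) \<subseteq> ?f ` row_span H"
      proof
        fix y assume "y \<in> row_span (mult_transpose H G)"
        then obtain coef where y: "y = (\<lambda>k. \<Sum>i\<in>UNIV. coef i * mult_transpose H G i k)"
          unfolding row_span_def by blast
        have m: "(\<lambda>j. \<Sum>i\<in>UNIV. coef i * H i j) \<in> row_span H" unfolding row_span_def by blast
        have "y = ?f (\<lambda>j. \<Sum>i\<in>UNIV. coef i * H i j)" using y key by simp
        thus "y \<in> ?f ` row_span H" using m by blast
      qed
    qed
    thus ?thesis using dH by simp
  qed
  ultimately show ?thesis by simp
qed

lemma sum_card:
  fixes C D :: "('n::finite \<Rightarrow> 'a::{comm_ring_1,finite}) set"
  assumes lC: "linear_code C" and lD: "linear_code D" and sum: "code_sum C D = UNIV"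
  shows "card C * card D = card (C \<inter> D) * CARD('n \<Rightarrow> 'a)"
proof -
  note l1 = lcD[OF lC] and l2 = lcD[OF lD]
  let ?A = "C \<times> D"
  let ?f = "\<lambda>(x, y). x + y"
  have h1: "card ?A = card {p\<in>?A. ?f p = 0} * card (?f ` ?A)"
    by (rule card_hom) (use l1 l2 in \<open>auto simp: zero_prod_def plus_prod_def uminus_prod_def\<close>)
  have h2: "?f ` ?A = UNIV"
  proof -
    have "?f ` ?A = code_sum C D" by (force simp: code_sum_def plus_fun_def)
    thus ?thesis using sum by simp
  qed
  have h3: "card {p\<in>?A. ?f p = 0} = card (C \<inter> D)"
  proof -
    have inj: "inj_on fst {p\<in>?A. ?f p = 0}"
      by (auto simp: inj_on_def) (metis add_left_cancel)
    moreover have img: "fst ` {p\<in>?A. ?f p = 0} = C \<inter> D"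
    proof
      show "fst ` {p\<in>?A. ?f p = 0} \<subseteq> C \<inter> D"
      proof
        fix x assume "x \<in> fst ` {p\<in>?A. ?f p = 0}"
        then obtain y where "x \<in> C" "y \<in> D" "x + y = 0" by force
        moreover hence "x = - y" by (simp add: eq_neg_iff_add_eq_0)
        ultimately show "x \<in> C \<inter> D" using l2(4) by auto
      qed
      show "C \<inter> D \<subseteq> fst ` {p\<in>?A. ?f p = 0}"
      proof
        fix x assume "x \<in> C \<inter> D"
        hence "(x, - x) \<in> {p\<in>?A. ?f p = 0}" using l2 by auto
        thus "x \<in> fst ` {p\<in>?A. ?f p = 0}" by force
      qed
    qed
    ultimately show ?thesis using card_image[OF inj] by simp
  qed
  have "card C * card D = card ?A" by (simp add: card_cartesian_product)
  also have "\<dots> = card {p\<in>?A. ?f p = 0} * card (?f ` ?A)" by (rule h1)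
  also have "\<dots> = card (C \<inter> D) * CARD('n \<Rightarrow> 'a)" by (simp only: h2 h3)
  finally show ?thesis .
qed

lemma residue_gt1:
  assumes loc: "local_ring TYPE('a::{comm_ring_1,finite})"
  shows "residue_card TYPE('a) > 1"
proof -
  let ?M = "the_max_ideal TYPE('a)"
  let ?rel = "{(x::'a, y). x - y \<in> ?M}"
  have a: "?rel `` {0} \<in> UNIV // ?rel" by (rule quotientI) simp
  have b: "?rel `` {1} \<in> UNIV // ?rel" by (rule quotientI) simp
  have "1 \<in> ?rel `` {1}" using M_props(1)[OF loc] by simp
  moreover have "1 \<notin> ?rel `` {0}"
  proof
    assume "1 \<in> ?rel `` {0}"
    hence "- 1 \<in> ?M" by simp
    hence "- (- 1) \<in> ?M" by (rule M_minus[OF loc])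
    thus False using M_props(4)[OF loc] by simp
  qed
  ultimately have ne: "?rel `` {0} \<noteq> ?rel `` {1}" by blast
  have "finite (UNIV // ?rel)" by simp
  hence "card {?rel `` {0}, ?rel `` {1}} \<le> card (UNIV // ?rel)"
    using a b by (intro card_mono) auto
  thus ?thesis using ne unfolding residue_card_def by simp
qed

lemma final_arith:
  fixes A B Cc D1 D2 N l :: real
  assumes "A + B = Cc + N" "D2 + B = N" "D1 + A = N"
  shows "(Cc = l) \<longleftrightarrow> ((D2 = A - l \<and> A - l = N - B) \<or> (D1 = B - l \<and> B - l = N - A))"
  using assms by linarith

theorem corollary3p12:
  fixes C1 C2 :: "('n::finite \<Rightarrow> 'a::{comm_ring_1,finite}) set"
    and G1 :: "'r1::finite \<Rightarrow> 'n \<Rightarrow> 'a" and G2 :: "'r2::finite \<Rightarrow> 'n \<Rightarrow> 'a"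
    and H1 :: "'s1::finite \<Rightarrow> 'n \<Rightarrow> 'a" and H2 :: "'s2::finite \<Rightarrow> 'n \<Rightarrow> 'a"
    and q w l :: nat
  assumes "local_frobenius TYPE('a)"
    and "q = residue_card TYPE('a)"
    and "card (UNIV::'a set) = q ^ w"
    and "linear_code C1" and "linear_code C2"
    and "generator_matrix G1 C1" and "parity_check_matrix H1 C1"
    and "generator_matrix G2 C2" and "parity_check_matrix H2 C2"
    and "code_sum C1 C2 = UNIV"
  shows "DLIP q l C1 C2 \<longleftrightarrow>
    (rank_q q (mult_transpose H2 G1) = rank_q q G1 - real l \<and>
     rank_q q G1 - real l = real (card (UNIV::'n set) * w) - rank_q q G2) \<or>
    (rank_q q (mult_transpose H1 G2) = rank_q q G2 - real l \<and>
     rank_q q G2 - real l = real (card (UNIV::'n set) * w) - rank_q q G1)"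
proof -
  note lf = assms(1)
  have loc: "local_ring TYPE('a)" using lf by (simp add: local_frobenius_def)
  have q1: "q > 1" using residue_gt1[OF loc] assms(2) by simp
  have sum2: "code_sum C2 C1 = UNIV"
  proof -
    have "z \<in> code_sum C2 C1" for z
    proof -
      have "z \<in> code_sum C1 C2" using assms(10) by simp
      then obtain x y where "x \<in> C1" "y \<in> C2" "z = (\<lambda>j. x j + y j)" unfolding code_sum_def by blast
      moreover have "(\<lambda>j. x j + y j) = (\<lambda>j. y j + x j)" by (simp add: add.commute)
      ultimately show ?thesis unfolding code_sum_def by blast
    qed
    thus ?thesis by blast
  qed
  let ?L = "\<lambda>x::nat. log (real q) (real x)"
  have Lmult: "?L (a * b) = ?L a + ?L b" if "a > 0" "b > 0" for a b
    using that q1 by (simp add: log_mult)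
  have N: "CARD('n \<Rightarrow> 'a) = q ^ (w * CARD('n))"
    using assms(3) by (simp add: card_fun power_mult)
  have LN: "?L (CARD('n \<Rightarrow> 'a)) = real (CARD('n) * w)"
    unfolding N using q1 by (simp add: log_nat_power)
  have pos: "card X > 0" if "linear_code X" for X :: "('n \<Rightarrow> 'a) set"
    using lcD(1)[OF that] by (auto simp: card_gt_0_iff)
  have e1: "?L (card C1) + ?L (card C2) = ?L (card (C1 \<inter> C2)) + real (CARD('n) * w)"
  proof -
    have "?L (card C1 * card C2) = ?L (card (C1 \<inter> C2) * CARD('n \<Rightarrow> 'a))"
      using sum_card[OF assms(4,5,10)] by simp
    moreover have "card (C1 \<inter> C2) > 0" using lcD(1)[OF assms(4)] lcD(1)[OF assms(5)] by (auto simp: card_gt_0_iff)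
    ultimately show ?thesis using Lmult pos assms(4,5) LN by simp
  qed
  have e2: "?L (card (row_span (mult_transpose H2 G1))) + ?L (card C2) = real (CARD('n) * w)"
  proof -
    have "?L (card (dual_code C2) * card C2) = ?L (CARD('n \<Rightarrow> 'a))"
      using duality[OF lf assms(5)] by (simp add: mult.commute)
    thus ?thesis using rs_mt[OF assms(6,9,10)] Lmult pos[OF dual_lc] pos[OF assms(5)] LN by simp
  qed
  have e3: "?L (card (row_span (mult_transpose H1 G2))) + ?L (card C1) = real (CARD('n) * w)"
  proof -
    have "?L (card (dual_code C1) * card C1) = ?L (CARD('n \<Rightarrow> 'a))"
      using duality[OF lf assms(4)] by (simp add: mult.commute)
    thus ?thesis using rs_mt[OF assms(8,7) sum2] Lmult pos[OF dual_lc] pos[OF assms(4)] LN by simp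
  qed
  have r1: "rank_q q G1 = ?L (card C1)" using assms(6) by (simp add: rank_q_def generator_matrix_def)
  have r2: "rank_q q G2 = ?L (card C2)" using assms(8) by (simp add: rank_q_def generator_matrix_def)
  show ?thesis
    unfolding DLIP_def code_dim_def r1 r2
    unfolding rank_q_def
    by (rule final_arith[OF e1 e2 e3])
qed

end
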